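(* Let $\alpha\ge1$, let $m_0:[0,\infty)\to[0,\infty)$ be bounded, Lipschitz and non-decreasing with $m_0(0)=0$, let $h_\rho,h_t>0$ satisfy (CFL), let $M_j^n$ be given by the scheme (M), and let $U_j^n=\frac{M_j^n-M_{j-1}^n}{h_\rho}$ for $j\ge1$. Then $U_j^n\ge0$ for all $n,j$ and $$\sup_{j}U_j^{n+1}\le\sup_jU_j^n\qquad\text{for all }n\ge0.$$
   Context: (CFL): $\frac{h_t}{h_\rho}\le\frac{1}{2\alpha\|(m_0)_\rho\|_\infty^{\alpha-1}\|m_0\|_\infty}$. Scheme (M): with $t_n=nh_t$, $\rho_j=jh_\rho$, $H(s)=\big(\min\{s_+,\|(m_0)_\rho\|_\infty\}\big)^\alpha$, set $M_j^0=m_0(\rho_j)$ ($j\ge0$), $M_0^n=0$ ($n>0$), and $M_j^{n+1}=M_j^n\big/\big(1+h_tH\big(\frac{M_j^n-M_{j-1}^n}{h_\rho}\big)\big)$ for $j\ge1$, $n\ge0$. *)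

theory Defs
  imports "HOL-Analysis.Analysis"
begin

definition sup_norm :: "(real \<Rightarrow> real) \<Rightarrow> real" where
  "sup_norm f = (SUP x\<in>{0..}. \<bar>f x\<bar>)"

text \<open>The L-infinity norm of the (a.e.) derivative of a Lipschitz function on [0,oo),
  which equals its best Lipschitz constant on [0,oo).\<close>
definition deriv_sup_norm :: "(real \<Rightarrow> real) \<Rightarrow> real" where
  "deriv_sup_norm f = Inf {C. C-lipschitz_on {0..} f}"

definition Hfun :: "real \<Rightarrow> real \<Rightarrow> real \<Rightarrow> real" where
  "Hfun \<alpha> L s = (min (max s 0) L) powr \<alpha>"

end

theory Submission
  imports Defs
begin

lemma powr_lip:
  fixes x y L a :: real
  assumes "a \<ge> 1" "0 \<le> x" "x \<le> y" "y \<le> L"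
  shows "y powr a - x powr a \<le> a * L powr (a - 1) * (y - x)"
proof (cases "x = y")
  case True then show ?thesis by simp
next
  case False
  hence xy: "x < y" using assms by simp
  have cont: "continuous_on {x..y} (\<lambda>z. z powr a)"
    using assms by (intro continuous_on_powr') (auto intro: continuous_intros)
  have dif: "(\<lambda>z. z powr a) differentiable (at z)" if "x < z" "z < y" for z
  proof -
    have "z > 0" using that assms by linarith
    then show ?thesis using has_real_derivative_powr real_differentiable_def by blast
  qed
  obtain l z where z: "x < z" "z < y" "DERIV (\<lambda>z. z powr a) z :> l"
     "y powr a - x powr a = (y - x) * l"
    using MVT[OF xy cont dif] by blast
  have z0: "z > 0" using z assms by linarith
  have "l = a * z powr (a - 1)"
    by (rule DERIV_unique[OF z(3) has_real_derivative_powr[OF z0]])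
  moreover have "z powr (a - 1) \<le> L powr (a - 1)"
    using assms z by (intro powr_mono2) auto
  ultimately have "(y - x) * l \<le> (y - x) * (a * L powr (a - 1))"
    using xy assms by (intro mult_left_mono) auto
  then show ?thesis using z(4) by (simp add: mult_ac)
qed

lemma H_lip:
  assumes "a \<ge> 1" "L \<ge> 0" "0 \<le> u" "u \<le> v"
  shows "Hfun a L v - Hfun a L u \<le> a * L powr (a - 1) * (v - u)"
proof -
  have "Hfun a L v - Hfun a L u \<le> a * L powr (a - 1) * (min v L - min u L)"
  proof -
    have e: "Hfun a L v = (min v L) powr a" "Hfun a L u = (min u L) powr a"
      unfolding Hfun_def using assms by (simp_all add: max_def)
    show ?thesis unfolding e by (rule powr_lip) (use assms in auto)
  qed
  also have "\<dots> \<le> a * L powr (a - 1) * (v - u)"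
    using assms by (intro mult_left_mono) auto
  finally show ?thesis .
qed

lemma H_nonneg: "Hfun a L s \<ge> 0" unfolding Hfun_def by simp

lemma H_mono: assumes "a \<ge> 1" "L \<ge> 0" "u \<le> v" shows "Hfun a L u \<le> Hfun a L v"
  unfolding Hfun_def using assms by (intro powr_mono2) auto


lemma core_pos:
  fixes a b K t h l Hx :: real
  assumes "0 \<le> b" "b \<le> a" "b \<le> K" "t > 0" "h > 0" "t * (l * K) \<le> h / 2"
    "0 \<le> Hx" "Hx \<le> l * ((a - b) / h)" "l \<ge> 0"
  shows "b \<le> a / (1 + t * Hx)"
proof -
  have d: "1 + t * Hx > 0" using assms by (simp add: add_pos_nonneg)
  have "b * (t * Hx) \<le> K * (t * (l * ((a - b) / h)))"
    using assms by (intro mult_mono) (auto intro: mult_left_mono)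
  also have "\<dots> = (t * (l * K)) * ((a - b) / h)" by simp
  also have "\<dots> \<le> (h / 2) * ((a - b) / h)"
    using assms by (intro mult_right_mono) auto
  also have "\<dots> = (a - b) / 2" using assms by simp
  finally have "b * (1 + t * Hx) \<le> a" using assms by (simp add: algebra_simps)
  then show ?thesis using d by (simp add: pos_le_divide_eq)
qed

lemma core_sup:
  fixes a b c K t h l HU HV :: real
  assumes "0 \<le> c" "c \<le> b" "b \<le> a" "b \<le> K" "t > 0" "h > 0" "t * (l * K) \<le> h / 2"
    "0 \<le> HU" "0 \<le> HV" "l \<ge> 0"
    "(a - b) / h \<le> (b - c) / h \<Longrightarrow> HU \<le> HV \<and> HV - HU \<le> l * ((b - c) / h - (a - b) / h)"
    "(b - c) / h \<le> (a - b) / h \<Longrightarrow> HV \<le> HU"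
  shows "a / (1 + t * HU) - b / (1 + t * HV) \<le> max (a - b) (b - c)"
proof -
  define p where "p = 1 / (1 + t * HU)"
  define q where "q = 1 / (1 + t * HV)"
  have dU: "1 + t * HU \<ge> 1" "1 + t * HV \<ge> 1" using assms by auto
  have p: "0 < p" "p \<le> 1" using dU unfolding p_def by auto
  have q: "0 < q" "q \<le> 1" using dU unfolding q_def by auto
  have eq: "a / (1 + t * HU) - b / (1 + t * HV) = (a - b) * p + b * (p - q)"
  proof -
    have "a / (1 + t * HU) = a * p" "b / (1 + t * HV) = b * q" unfolding p_def q_def by simp_all
    then show ?thesis by (simp add: algebra_simps)
  qed
  have ab: "(a - b) * p \<le> a - b" using p assms by (simp add: mult_left_le)
  show ?thesis
  proof (cases "(b - c) / h \<le> (a - b) / h")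
    case True
    then have "HV \<le> HU" using assms by auto
    have pos: "0 < (1 + t * HU) * (1 + t * HV)" using dU by (simp add: mult_pos_pos)
    then have "p \<le> q" unfolding p_def q_def using dU assms \<open>HV \<le> HU\<close>
      by (intro divide_left_mono) (auto intro: mult_left_mono simp: pos)
    then have "b * (p - q) \<le> 0" using assms by (simp add: mult_nonneg_nonpos)
    then show ?thesis using eq ab by linarith
  next
    case False
    then have hv: "HU \<le> HV" "HV - HU \<le> l * ((b - c) / h - (a - b) / h)" using assms by auto
    have "p - q = t * (HV - HU) * (p * q)" unfolding p_def q_def using dU
      by (simp add: field_simps)
    also have "\<dots> \<le> t * (HV - HU)"
      using p q hv assms by (intro mult_left_le) (auto simp: mult_le_one)
    finally have pq: "p - q \<le> t * (HV - HU)" .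
    have pos: "0 < (1 + t * HU) * (1 + t * HV)" using dU by (simp add: mult_pos_pos)
    have pos2: "0 < (1 + t * HV) * (1 + t * HU)" using dU by (simp add: mult_pos_pos)
    have "q \<le> p" unfolding p_def q_def using dU assms hv
      by (intro divide_left_mono) (auto intro: mult_left_mono simp: pos2)
    have "b * (p - q) \<le> K * (t * (l * ((b - c) / h - (a - b) / h)))"
      using assms pq hv \<open>q \<le> p\<close> by (intro mult_mono) (auto intro: mult_left_mono order_trans)
    also have "\<dots> = (t * (l * K)) * ((b - c) / h - (a - b) / h)" by simp
    also have "\<dots> \<le> (h / 2) * ((b - c) / h - (a - b) / h)"
      using assms False by (intro mult_right_mono) auto
    also have "\<dots> = ((b - c) - (a - b)) / 2" using assms by (simp add: field_simps)
    finally have bpq: "b * (p - q) \<le> ((b - c) - (a - b)) / 2" .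
    have sum: "(a - b) * p + b * (p - q) \<le> (a - b) + ((b - c) - (a - b)) / 2"
      by (rule add_mono[OF ab bpq])
    moreover have "a - b \<le> b - c"
    proof -
      have "(a - b) / h \<le> (b - c) / h" using False by linarith
      then show ?thesis using assms by (simp add: divide_le_cancel)
    qed
    ultimately have "(a - b) * p + b * (p - q) \<le> b - c"
      using sum by (simp add: field_simps)
    then have "(a - b) * p + b * (p - q) \<le> max (a - b) (b - c)" by (rule order_trans) simp
    then show ?thesis using eq by simp
  qed
qed

theorem mainTheorem11:
  fixes \<alpha> h\<^sub>t h\<^sub>\<rho> :: real and m0 :: "real \<Rightarrow> real" and M :: "nat \<Rightarrow> nat \<Rightarrow> real"
  assumes alpha: "\<alpha> \<ge> 1"
    and m0_nonneg: "\<forall>x\<ge>0. m0 x \<ge> 0"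
    and m0_bdd: "bounded (m0 ` {0..})"
    and m0_lip: "\<exists>C. C-lipschitz_on {0..} m0"
    and m0_mono: "mono_on {0..} m0"
    and m0_zero: "m0 0 = 0"
    and ht: "h\<^sub>t > 0" and hr: "h\<^sub>\<rho> > 0"
    and CFL: "h\<^sub>t * (2 * \<alpha> * deriv_sup_norm m0 powr (\<alpha> - 1) * sup_norm m0) \<le> h\<^sub>\<rho>"
    and init: "\<forall>j. M 0 j = m0 (real j * h\<^sub>\<rho>)"
    and bdry: "\<forall>n>0. M n 0 = 0"
    and step: "\<forall>n j. j \<ge> 1 \<longrightarrow>
        M (Suc n) j = M n j / (1 + h\<^sub>t * Hfun \<alpha> (deriv_sup_norm m0) ((M n j - M n (j - 1)) / h\<^sub>\<rho>))"
  shows "(\<forall>n j. j \<ge> 1 \<longrightarrow> (M n j - M n (j - 1)) / h\<^sub>\<rho> \<ge> 0) \<and>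
         (\<forall>n. (SUP j\<in>{1..}. ereal ((M (Suc n) j - M (Suc n) (j - 1)) / h\<^sub>\<rho>))
              \<le> (SUP j\<in>{1..}. ereal ((M n j - M n (j - 1)) / h\<^sub>\<rho>)))"
  proof -
  define L where "L = deriv_sup_norm m0"
  define K where "K = sup_norm m0"
  define l where "l = \<alpha> * L powr (\<alpha> - 1)"
  define U where "U = (\<lambda>n j. (M n j - M n (j - 1)) / h\<^sub>\<rho>)"
  obtain C where C: "C-lipschitz_on {0..} m0" using m0_lip by blast
  have L0: "L \<ge> 0" unfolding L_def deriv_sup_norm_def
    using C by (intro cInf_greatest) (auto simp: lipschitz_on_def)
  have l0: "l \<ge> 0" unfolding l_def using alpha by simp
  obtain B where B: "\<forall>x\<in>m0 ` {0..}. norm x \<le> B" using m0_bdd bounded_iff by blast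
  have B': "\<bar>m0 x\<bar> \<le> B" if "x \<in> {0..}" for x using B that by simp
  have bdd: "bdd_above ((\<lambda>x. \<bar>m0 x\<bar>) ` {0..})" by (rule bdd_aboveI2) (rule B')
  have m0K: "m0 x \<le> K" if "x \<ge> 0" for x
  proof -
    have "\<bar>m0 x\<bar> \<le> (SUP x\<in>{0..}. \<bar>m0 x\<bar>)" by (rule cSUP_upper[OF _ bdd]) (use that in simp)
    then show ?thesis unfolding K_def sup_norm_def by linarith
  qed
  have cfl: "h\<^sub>t * (l * K) \<le> h\<^sub>\<rho> / 2" using CFL unfolding l_def L_def K_def
    by (simp add: algebra_simps)
  have Hl: "\<And>u v. 0 \<le> u \<Longrightarrow> u \<le> v \<Longrightarrow> Hfun \<alpha> L v - Hfun \<alpha> L u \<le> l * (v - u)"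
    unfolding l_def by (rule H_lip[OF alpha L0])
  have Hm: "\<And>u v. u \<le> v \<Longrightarrow> Hfun \<alpha> L u \<le> Hfun \<alpha> L v" by (rule H_mono[OF alpha L0])
  have stp: "M (Suc n) j = M n j / (1 + h\<^sub>t * Hfun \<alpha> L (U n j))" if "j \<ge> 1" for n j
    unfolding L_def U_def using step that by simp
  have M0: "M n 0 = 0" for n
  proof (cases n)
    case 0 then show ?thesis using init m0_zero by simp
  next
    case (Suc k) then show ?thesis using bdry by simp
  qed
  have dec: "0 \<le> M (Suc n) j \<and> M (Suc n) j \<le> M n j" if "0 \<le> M n j" for n j
  proof (cases "j = 0")
    case True then show ?thesis using M0 by simp
  next
    case False
    then have e: "M (Suc n) j = M n j / (1 + h\<^sub>t * Hfun \<alpha> L (U n j))" using stp by simp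
    have d: "1 \<le> 1 + h\<^sub>t * Hfun \<alpha> L (U n j)" using ht H_nonneg by simp
    have "M n j / (1 + h\<^sub>t * Hfun \<alpha> L (U n j)) \<le> M n j / 1"
      using that d by (intro divide_left_mono) auto
    then show ?thesis unfolding e using that d by simp
  qed
  have inv: "\<forall>j. 0 \<le> M n j \<and> M n j \<le> K \<and> (j \<ge> 1 \<longrightarrow> M n (j - 1) \<le> M n j)" for n
  proof (induction n)
    case 0
    show ?case
    proof (intro allI conjI impI)
      fix j
      show "0 \<le> M 0 j" "M 0 j \<le> K" using init m0_nonneg m0K hr by auto
      assume "1 \<le> j"
      have "real (j - 1) * h\<^sub>\<rho> \<le> real j * h\<^sub>\<rho>" using hr by (intro mult_right_mono) auto
      then show "M 0 (j - 1) \<le> M 0 j" using init m0_mono hr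
        by (auto intro!: mono_onD[OF m0_mono])
    qed
  next
    case (Suc n)
    have dd: "\<And>j. 1 \<le> 1 + h\<^sub>t * Hfun \<alpha> L (U n j)" using ht H_nonneg by simp
    have nn: "0 \<le> M (Suc n) j \<and> M (Suc n) j \<le> M n j" for j
    proof -
      have "0 \<le> M n j" using Suc by blast
      then show ?thesis by (rule dec)
    qed
    show ?case
    proof (intro allI conjI impI)
      fix j
      show "0 \<le> M (Suc n) j" using nn by blast
      have "M n j \<le> K" using Suc by blast
      then show "M (Suc n) j \<le> K" using nn[of j] by linarith
      assume j: "1 \<le> j"
      show "M (Suc n) (j - 1) \<le> M (Suc n) j"
      proof (cases "j = 1")
        case True then show ?thesis using M0 nn by simp
      next
        case False
        have "M (Suc n) (j - 1) \<le> M n (j - 1)" using nn by blast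
        also have "\<dots> \<le> M n j / (1 + h\<^sub>t * Hfun \<alpha> L (U n j))"
        proof (rule core_pos[OF _ _ _ ht hr cfl H_nonneg _ l0])
          show "0 \<le> M n (j - 1)" "M n (j - 1) \<le> M n j" "M n (j - 1) \<le> K" using Suc j by auto
          have "0 \<le> U n j" unfolding U_def using Suc j hr by auto
          then show "Hfun \<alpha> L (U n j) \<le> l * ((M n j - M n (j - 1)) / h\<^sub>\<rho>)"
            using Hl[of 0 "U n j"] L0 unfolding U_def by (simp add: Hfun_def min_absorb1)
        qed
        also have "\<dots> = M (Suc n) j" using stp j by simp
        finally show ?thesis .
      qed
    qed
  qed
  show ?thesis
  proof (intro conjI allI impI)
    fix n j :: nat
    assume "1 \<le> j"
    then show "0 \<le> (M n j - M n (j - 1)) / h\<^sub>\<rho>" using inv[of n] hr by auto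
  next
    fix n
    show "(SUP j\<in>{1..}. ereal ((M (Suc n) j - M (Suc n) (j - 1)) / h\<^sub>\<rho>))
              \<le> (SUP j\<in>{1..}. ereal ((M n j - M n (j - 1)) / h\<^sub>\<rho>))"
    proof (rule SUP_least)
      fix j :: nat assume "j \<in> {1..}"
      then have j: "j \<ge> 1" by simp
      have up: "\<And>i. i \<ge> 1 \<Longrightarrow> ereal (U n i) \<le> (SUP j\<in>{1..}. ereal ((M n j - M n (j - 1)) / h\<^sub>\<rho>))"
        unfolding U_def by (rule SUP_upper) auto
      show "ereal ((M (Suc n) j - M (Suc n) (j - 1)) / h\<^sub>\<rho>)
         \<le> (SUP j\<in>{1..}. ereal ((M n j - M n (j - 1)) / h\<^sub>\<rho>))"
      proof (cases "j = 1")
        case True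
        have "0 \<le> M n 1" using inv[of n] by blast
        then have "M (Suc n) 1 \<le> M n 1" using dec by blast
        then have "(M (Suc n) j - M (Suc n) (j - 1)) / h\<^sub>\<rho> \<le> U n 1"
          unfolding U_def using True M0 hr by (simp add: divide_right_mono)
        then show ?thesis using up[of 1] by (meson ereal_less_eq(3) order_trans order_refl)
      next
        case False
        define a where "a = M n j"
        define b where "b = M n (j - 1)"
        define c where "c = M n (j - 2)"
        have jj: "j - 1 - 1 = j - 2" "j - 1 \<ge> 1" using False j by auto
        have Ua: "U n j = (a - b) / h\<^sub>\<rho>" "U n (j - 1) = (b - c) / h\<^sub>\<rho>"
          unfolding U_def a_def b_def c_def jj by auto
        have "M (Suc n) j - M (Suc n) (j - 1)
          = a / (1 + h\<^sub>t * Hfun \<alpha> L ((a - b) / h\<^sub>\<rho>)) - b / (1 + h\<^sub>t * Hfun \<alpha> L ((b - c) / h\<^sub>\<rho>))"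
          using stp[of j n] stp[of "j - 1" n] j jj Ua unfolding a_def b_def by simp
        also have "\<dots> \<le> max (a - b) (b - c)"
        proof (rule core_sup[OF _ _ _ _ ht hr cfl H_nonneg H_nonneg l0])
          show "0 \<le> c" "c \<le> b" "b \<le> a" "b \<le> K"
            unfolding a_def b_def c_def using inv[of n] inv[of n, rule_format, of "j - 1"] j jj by auto
          have ub: "0 \<le> (a - b) / h\<^sub>\<rho>" using \<open>b \<le> a\<close> hr by simp
          show "Hfun \<alpha> L ((a - b) / h\<^sub>\<rho>) \<le> Hfun \<alpha> L ((b - c) / h\<^sub>\<rho>) \<and>
            Hfun \<alpha> L ((b - c) / h\<^sub>\<rho>) - Hfun \<alpha> L ((a - b) / h\<^sub>\<rho>) \<le> l * ((b - c) / h\<^sub>\<rho> - (a - b) / h\<^sub>\<rho>)"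
            if "(a - b) / h\<^sub>\<rho> \<le> (b - c) / h\<^sub>\<rho>" using Hm[OF that] Hl[OF ub that] by simp
          show "Hfun \<alpha> L ((b - c) / h\<^sub>\<rho>) \<le> Hfun \<alpha> L ((a - b) / h\<^sub>\<rho>)"
            if "(b - c) / h\<^sub>\<rho> \<le> (a - b) / h\<^sub>\<rho>" using Hm[OF that] by simp
        qed
        finally have "(M (Suc n) j - M (Suc n) (j - 1)) / h\<^sub>\<rho> \<le> max (a - b) (b - c) / h\<^sub>\<rho>"
          using hr by (simp add: divide_right_mono)
        also have "\<dots> = max (U n j) (U n (j - 1))" unfolding Ua using hr
          by (simp add: max_divide_distrib_right)
        finally have "(M (Suc n) j - M (Suc n) (j - 1)) / h\<^sub>\<rho> \<le> max (U n j) (U n (j - 1))" .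
        then have "ereal ((M (Suc n) j - M (Suc n) (j - 1)) / h\<^sub>\<rho>) \<le> max (ereal (U n j)) (ereal (U n (j - 1)))"
          by (metis ereal_less_eq(3) ereal_max)
        also have "\<dots> \<le> (SUP j\<in>{1..}. ereal ((M n j - M n (j - 1)) / h\<^sub>\<rho>))"
          using up[of j] up[of "j - 1"] j jj by simp
        finally show ?thesis .
      qed
    qed
  qed
qed


end
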